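(* Let $H=(V,E)$ be an $n$-vertex undirected multigraph without self-loops and with minimum degree at least $3$. Let $\gamma\ge 1$, let $\Sigma$ be a set, and suppose each edge $e\in E$ is assigned a set $w_e\subseteq\Sigma$ with $|w_e|\le\gamma$, such that every element of $\Sigma$ belongs to at most $\gamma$ of the sets $w_e$. Let $\beta=\lceil\log_{3/2}(12\gamma^2)\rceil$. Then there exist a subgraph $H_0=(V_0,E_0)$ of $H$ and a path decomposition $(B_i)_{i=1}^q$ of $H_0$ of width at most $4(\beta+3)$ such that: (a) $|E_0|=|V_0|+1$; (b) $|V_0|\le 4(\log_{3/2}n+2)$; (c) for every pair of edges $e_1,e_2\in E_0$ with $w_{e_1}\cap w_{e_2}\neq\emptyset$ there is an index $i$ such that all endpoints of $e_1$ and of $e_2$ lie in $B_i$; (d) for every edge $uv\in E_0$ the set of indices $\{i: u,v\in B_i\}$ is an interval.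
   Context: A path decomposition of a graph $G$ is a sequence of vertex subsets (bags) $B_1,\dots,B_q$ whose union is $V(G)$, such that every edge has both endpoints in some bag and, for each vertex $v$, the indices of bags containing $v$ form an interval; its width is the maximum bag size minus one. Parallel edges are allowed in $H$. *)

theory Defs
  imports Complex_Main
begin

text \<open>A finite loopless multigraph: vertex set V, a set E of edge identifiers, and an
  endpoint map ends assigning each edge a 2-element set of vertices (so parallel edges are
  allowed but self-loops are not).\<close>
definition multigraph :: "'v set \<Rightarrow> 'e set \<Rightarrow> ('e \<Rightarrow> 'v set) \<Rightarrow> bool" where
  "multigraph V E ends \<longleftrightarrow> finite V \<and> finite E \<and>
     (\<forall>e\<in>E. ends e \<subseteq> V \<and> card (ends e) = 2)"

definition degree :: "'e set \<Rightarrow> ('e \<Rightarrow> 'v set) \<Rightarrow> 'v \<Rightarrow> nat" where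
  "degree E ends v = card {e\<in>E. v \<in> ends e}"

definition subgraph :: "'v set \<Rightarrow> 'e set \<Rightarrow> 'v set \<Rightarrow> 'e set \<Rightarrow> ('e \<Rightarrow> 'v set) \<Rightarrow> bool" where
  "subgraph V0 E0 V E ends \<longleftrightarrow> V0 \<subseteq> V \<and> E0 \<subseteq> E \<and> (\<forall>e\<in>E0. ends e \<subseteq> V0)"

definition nat_interval :: "nat set \<Rightarrow> bool" where
  "nat_interval S \<longleftrightarrow> (\<forall>i j k. i \<in> S \<longrightarrow> k \<in> S \<longrightarrow> i \<le> j \<longrightarrow> j \<le> k \<longrightarrow> j \<in> S)"

text \<open>Path decomposition given as a list of bags B!0,...,B!(q-1), q = length B.\<close>
definition path_decomposition :: "'v set \<Rightarrow> 'e set \<Rightarrow> ('e \<Rightarrow> 'v set) \<Rightarrow> 'v set list \<Rightarrow> bool" where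
  "path_decomposition V E ends B \<longleftrightarrow>
     (\<Union> (set B)) = V \<and>
     (\<forall>e\<in>E. \<exists>i<length B. ends e \<subseteq> B ! i) \<and>
     (\<forall>v\<in>V. nat_interval {i. i < length B \<and> v \<in> B ! i})"

definition pd_width :: "'v set list \<Rightarrow> nat" where
  "pd_width B = Max (insert 0 (card ` set B)) - 1"

end

theory Submission
  imports Defs
begin

fun Fg :: "'e set \<Rightarrow> ('e \<Rightarrow> 'v set) \<Rightarrow> ('e \<Rightarrow> 's set) \<Rightarrow> 'v \<Rightarrow> nat \<Rightarrow> nat \<Rightarrow> 'e set" where
  "Fg E ends w v \<beta> 0 = {}"
| "Fg E ends w v \<beta> (Suc r) = Fg E ends w v \<beta> r \<union> {e\<in>E. ends e \<inter> insert v (\<Union> (ends ` Fg E ends w v \<beta> r)) \<noteq> {} \<and> \<not> (\<exists>e'\<in>Fg E ends w v \<beta> (r - \<beta>). w e \<inter> w e' \<noteq> {})}"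

locale L =
  fixes V :: "'v set" and E :: "'e set" and ends :: "'e \<Rightarrow> 'v set"
    and S :: "'s set" and w :: "'e \<Rightarrow> 's set" and \<gamma> :: nat and v :: 'v and \<beta> :: nat
  assumes H: "multigraph V E ends"
    and vV: "v \<in> V"
    and mindeg: "\<forall>v\<in>V. degree E ends v \<ge> 3"
    and w_sub: "\<forall>e\<in>E. w e \<subseteq> S \<and> finite (w e) \<and> card (w e) \<le> \<gamma>"
    and w_load: "\<forall>x\<in>S. card {e\<in>E. x \<in> w e} \<le> \<gamma>"
begin

lemma finV: "finite V" and finE: "finite E"
  and ends_sub: "e\<in>E \<Longrightarrow> ends e \<subseteq> V" and ends_card: "e\<in>E \<Longrightarrow> card (ends e) = 2"
  using H unfolding multigraph_def by auto

lemma ends_fin: "e \<in> E \<Longrightarrow> finite (ends e)"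
  using ends_card card.infinite by fastforce

abbreviation F where "F \<equiv> Fg E ends w v \<beta>"

definition Bl where "Bl r = insert v (\<Union> (ends ` F r))"
definition Bad where "Bad r = {e\<in>E. \<exists>e'\<in>F (r - \<beta>). w e \<inter> w e' \<noteq> {}}"

lemma F_Suc: "F (Suc r) = F r \<union> {e\<in>E. ends e \<inter> Bl r \<noteq> {} \<and> e \<notin> Bad r}"
  unfolding Bl_def Bad_def by auto

declare Fg.simps(2)[simp del]

lemma F_E: "F r \<subseteq> E" by (induction r) (auto simp: F_Suc)
lemma F_fin: "finite (F r)" using F_E finE finite_subset by blast
lemma F_mono: "r \<le> s \<Longrightarrow> F r \<subseteq> F s"
  by (rule lift_Suc_mono_le[of F]) (auto simp: F_Suc)
lemma Bl_mono: "r \<le> s \<Longrightarrow> Bl r \<subseteq> Bl s"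
  using F_mono unfolding Bl_def by blast
lemma Bad_mono: "r \<le> s \<Longrightarrow> Bad r \<subseteq> Bad s"
proof -
  assume "r \<le> s"
  then have "F (r - \<beta>) \<subseteq> F (s - \<beta>)" by (intro F_mono) simp
  then show ?thesis unfolding Bad_def by blast
qed
lemma Bl_V: "Bl r \<subseteq> V" using F_E ends_sub vV by (auto simp: Bl_def)
lemma Bl_fin: "finite (Bl r)" using Bl_V finV finite_subset by blast
lemma Bl0: "Bl 0 = {v}" by (simp add: Bl_def)
lemma v_Bl: "v \<in> Bl r" by (simp add: Bl_def)
lemma ends_Bl: "e \<in> F r \<Longrightarrow> ends e \<subseteq> Bl r" by (auto simp: Bl_def)

definition dep where "dep u = (LEAST r. u \<in> Bl r)"

lemma dep_le: "u \<in> Bl s \<Longrightarrow> dep u \<le> s"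
  unfolding dep_def by (rule Least_le)
lemma Bl_dep: "u \<in> Bl s \<Longrightarrow> u \<in> Bl (dep u)"
  unfolding dep_def by (rule LeastI)
lemma Bl_iff: "u \<in> Bl s \<Longrightarrow> u \<in> Bl t \<longleftrightarrow> dep u \<le> t"
  using dep_le Bl_dep Bl_mono by blast
lemma dep_v: "dep v = 0" using dep_le[OF v_Bl[of 0]] by simp
lemma dep0: "u \<in> Bl s \<Longrightarrow> dep u = 0 \<Longrightarrow> u = v"
  using Bl_dep Bl0 by fastforce

definition lev where "lev e = (LEAST s. e \<in> F s)"

lemma lev: assumes "e \<in> F R"
  shows "e \<in> F (lev e)" "lev e \<le> R" "lev e \<ge> 1" "e \<notin> F (lev e - 1)"
proof -
  show 1: "e \<in> F (lev e)" using assms unfolding lev_def by (rule LeastI)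
  show "lev e \<le> R" using assms unfolding lev_def by (rule Least_le)
  show 2: "lev e \<ge> 1" using 1 by (cases "lev e") auto
  show "e \<notin> F (lev e - 1)"
    using 2 not_less_Least[of "lev e - 1" "\<lambda>s. e \<in> F s"] unfolding lev_def[symmetric] by auto
qed

lemma lev_eq: "e \<in> F (Suc r) \<Longrightarrow> e \<notin> F r \<Longrightarrow> lev e = Suc r"
proof -
  assume a: "e \<in> F (Suc r)" "e \<notin> F r"
  have "lev e \<le> Suc r" using lev(2)[OF a(1)] .
  moreover have "\<not> lev e \<le> r" using lev(1)[OF a(1)] F_mono a(2) by blast
  ultimately show ?thesis by simp
qed

lemma lev_ends: assumes "e \<in> F R"
  shows "\<forall>u\<in>ends e. dep u \<le> lev e \<and> lev e \<le> Suc (dep u)"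
    and "\<exists>u\<in>ends e. Suc (dep u) = lev e"
proof -
  obtain r where r: "lev e = Suc r" using lev(3)[OF assms] by (cases "lev e") auto
  have eF: "e \<in> F (Suc r)" "e \<notin> F r" using lev[OF assms] r by auto
  then have new: "e \<in> E" "ends e \<inter> Bl r \<noteq> {}" "e \<notin> Bad r" by (auto simp: F_Suc)
  have sub: "ends e \<subseteq> Bl (Suc r)" using ends_Bl[OF eF(1)] .
  have ge: "r \<le> dep u" if u: "u \<in> ends e" for u
  proof (cases r)
    case 0 then show ?thesis by simp
  next
    case (Suc r')
    have "ends e \<inter> Bl r' = {}"
    proof (rule ccontr)
      assume "ends e \<inter> Bl r' \<noteq> {}"
      moreover have "e \<notin> Bad r'" using new(3) Bad_mono[of r' r] Suc by auto
      ultimately have "e \<in> F (Suc r')" using new(1) by (auto simp: F_Suc)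
      then show False using eF(2) Suc by simp
    qed
    then have "u \<notin> Bl r'" using u by auto
    moreover have "u \<in> Bl (Suc r)" using sub u by auto
    ultimately show ?thesis using Bl_iff Suc by fastforce
  qed
  show "\<forall>u\<in>ends e. dep u \<le> lev e \<and> lev e \<le> Suc (dep u)"
    using ge sub dep_le r by fastforce
  obtain u where "u \<in> ends e" "u \<in> Bl r" using new(2) by auto
  then show "\<exists>u\<in>ends e. Suc (dep u) = lev e" using ge dep_le r by force
qed

lemma lev_conflict: assumes "e1 \<in> F R" "e2 \<in> F R" "w e1 \<inter> w e2 \<noteq> {}"
  shows "lev e1 \<le> lev e2 + \<beta>"
proof -
  obtain r where r: "lev e1 = Suc r" using lev(3)[OF assms(1)] by (cases "lev e1") auto
  have eF: "e1 \<in> F (Suc r)" "e1 \<notin> F r" using lev[OF assms(1)] r by auto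
  then have new: "e1 \<notin> Bad r" by (auto simp: F_Suc)
  have "\<not> lev e2 \<le> r - \<beta>"
  proof
    assume "lev e2 \<le> r - \<beta>"
    then have "e2 \<in> F (r - \<beta>)" using F_mono lev(1)[OF assms(2)] by blast
    then have "e1 \<in> Bad r" using assms(3) F_E assms(1) unfolding Bad_def by blast
    then show False using new by simp
  qed
  then show ?thesis using r by linarith
qed

lemma card_filter_sum: "finite A \<Longrightarrow> card {x\<in>A. P x} = (\<Sum>x\<in>A. if P x then 1 else 0)"
  by (simp add: sum.inter_filter[symmetric])

lemma bad_card: "card (Bad r) \<le> \<gamma> * \<gamma> * card (F (r - \<beta>))"
proof -
  have "Bad r \<subseteq> (\<Union>e'\<in>F (r - \<beta>). \<Union>x\<in>w e'. {e\<in>E. x \<in> w e})"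
    unfolding Bad_def by blast
  then have "card (Bad r) \<le> card (\<Union>e'\<in>F (r - \<beta>). \<Union>x\<in>w e'. {e\<in>E. x \<in> w e})"
    by (intro card_mono) (use w_sub F_E in \<open>auto intro!: finite_UN_I simp: F_fin finE\<close>)
  also have "\<dots> \<le> (\<Sum>e'\<in>F (r - \<beta>). card (\<Union>x\<in>w e'. {e\<in>E. x \<in> w e}))"
    by (rule card_UN_le) (rule F_fin)
  also have "\<dots> \<le> (\<Sum>e'\<in>F (r - \<beta>). \<gamma> * \<gamma>)"
  proof (rule sum_mono)
    fix e' assume e': "e' \<in> F (r - \<beta>)"
    then have e'E: "e' \<in> E" using F_E by blast
    have "card (\<Union>x\<in>w e'. {e\<in>E. x \<in> w e}) \<le> (\<Sum>x\<in>w e'. card {e\<in>E. x \<in> w e})"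
      by (rule card_UN_le) (use w_sub e'E in auto)
    also have "\<dots> \<le> (\<Sum>x\<in>w e'. \<gamma>)"
      by (rule sum_mono) (use w_sub w_load e'E in blast)
    also have "\<dots> = card (w e') * \<gamma>" by simp
    also have "\<dots> \<le> \<gamma> * \<gamma>" using w_sub e'E by simp
    finally show "card (\<Union>x\<in>w e'. {e\<in>E. x \<in> w e}) \<le> \<gamma> * \<gamma>" .
  qed
  also have "\<dots> = \<gamma> * \<gamma> * card (F (r - \<beta>))" by simp
  finally show ?thesis .
qed

lemma growth_step: assumes "card (F (Suc r)) \<le> card (Bl (Suc r))"
  shows "2 * card (Bl r) \<le> card (Bl (Suc r)) + 2 * card (Bad r)"
proof -
  let ?B = "Bl r" and ?F = "F (Suc r)"
  have "3 * card ?B = (\<Sum>x\<in>?B. 3)" by simp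
  also have "\<dots> \<le> (\<Sum>x\<in>?B. degree E ends x)"
    by (rule sum_mono) (use mindeg Bl_V in blast)
  also have "\<dots> = (\<Sum>x\<in>?B. \<Sum>e\<in>E. if x \<in> ends e then 1 else 0)"
    unfolding degree_def by (intro sum.cong refl card_filter_sum finE)
  also have "\<dots> = (\<Sum>e\<in>E. \<Sum>x\<in>?B. if x \<in> ends e then 1 else 0)"
    by (rule sum.swap)
  also have "\<dots> = (\<Sum>e\<in>E. card (ends e \<inter> ?B))"
  proof (intro sum.cong refl)
    fix e assume "e \<in> E"
    have "ends e \<inter> ?B = {x\<in>?B. x \<in> ends e}" by blast
    then show "(\<Sum>x\<in>?B. if x \<in> ends e then 1 else 0) = card (ends e \<inter> ?B)"
      using card_filter_sum[OF Bl_fin[of r], of "\<lambda>x. x \<in> ends e"] by simp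
  qed
  also have "\<dots> = (\<Sum>e\<in>?F. card (ends e \<inter> ?B)) + (\<Sum>e\<in>E - ?F. card (ends e \<inter> ?B))"
    using sum.subset_diff[OF F_E[of "Suc r"] finE, of "\<lambda>e. card (ends e \<inter> ?B)"] by simp
  also have "(\<Sum>e\<in>E - ?F. card (ends e \<inter> ?B)) \<le> (\<Sum>e\<in>E - ?F. if e \<in> Bad r then 2 else 0)"
  proof (rule sum_mono)
    fix e assume e: "e \<in> E - ?F"
    have "card (ends e \<inter> ?B) \<le> card (ends e)"
      by (rule card_mono) (use ends_fin e in auto)
    then have le2: "card (ends e \<inter> ?B) \<le> 2" using ends_card e by simp
    show "card (ends e \<inter> ?B) \<le> (if e \<in> Bad r then 2 else 0)"
    proof (cases "e \<in> Bad r")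
      case False
      then have "ends e \<inter> ?B = {}" using e by (auto simp: F_Suc)
      then show ?thesis using False by simp
    qed (use le2 in simp)
  qed
  also have "(\<Sum>e\<in>E - ?F. if e \<in> Bad r then 2 else 0) = 2 * card ((E - ?F) \<inter> Bad r)"
    using sum.inter_filter[of "E - ?F" "\<lambda>_. 2::nat" "\<lambda>e. e \<in> Bad r", symmetric] finE
    by (simp add: Int_def conj_commute)
  also have "card ((E - ?F) \<inter> Bad r) \<le> card (Bad r)"
    by (rule card_mono) (auto simp: Bad_def finE)
  finally have A: "3 * card ?B \<le> (\<Sum>e\<in>?F. card (ends e \<inter> ?B)) + 2 * card (Bad r)" by simp
  have B: "(\<Sum>e\<in>?F. card (ends e \<inter> ?B)) + (\<Sum>e\<in>?F. card (ends e - ?B)) = 2 * card ?F"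
  proof -
    have "(\<Sum>e\<in>?F. card (ends e \<inter> ?B)) + (\<Sum>e\<in>?F. card (ends e - ?B)) = (\<Sum>e\<in>?F. 2)"
      unfolding sum.distrib[symmetric]
    proof (intro sum.cong refl)
      fix e assume "e \<in> ?F"
      then have eE: "e \<in> E" using F_E by blast
      have "card (ends e \<inter> ?B) + card (ends e - ?B) = card (ends e)"
        using card_Int_Diff[OF ends_fin[OF eE]] by simp
      then show "card (ends e \<inter> ?B) + card (ends e - ?B) = 2" using ends_card eE by simp
    qed
    then show ?thesis by simp
  qed
  have "Bl (Suc r) - ?B \<subseteq> (\<Union>e\<in>?F. ends e - ?B)"
    using v_Bl by (auto simp: Bl_def)
  then have "card (Bl (Suc r) - ?B) \<le> card (\<Union>e\<in>?F. ends e - ?B)"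
    by (intro card_mono finite_UN_I F_fin finite_Diff ends_fin) (use F_E in blast)+
  also have "\<dots> \<le> (\<Sum>e\<in>?F. card (ends e - ?B))" by (rule card_UN_le) (rule F_fin)
  finally have C: "card (Bl (Suc r)) - card ?B \<le> (\<Sum>e\<in>?F. card (ends e - ?B))"
    using card_Diff_subset[OF Bl_fin Bl_mono[of r "Suc r"]] by simp
  have D: "card ?B \<le> card (Bl (Suc r))" by (rule card_mono[OF Bl_fin Bl_mono]) simp
  show ?thesis using A B C D assms by linarith
qed

lemma growth:
  assumes hb: "4 * real \<gamma> ^ 2 \<le> (3/2) ^ \<beta>"
    and all: "\<forall>j\<le>N. card (F j) \<le> card (Bl j)"
  shows "j \<le> N \<Longrightarrow> i \<le> j \<Longrightarrow> (3/2) ^ (j - i) * real (card (Bl i)) \<le> real (card (Bl j))"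
proof (induction j arbitrary: i)
  case 0 then show ?case by simp
next
  case (Suc r)
  have IH: "\<And>i. i \<le> r \<Longrightarrow> (3/2) ^ (r - i) * real (card (Bl i)) \<le> real (card (Bl r))"
    using Suc.IH Suc.prems by simp
  have st: "2 * card (Bl r) \<le> card (Bl (Suc r)) + 2 * card (Bad r)"
    using growth_step all Suc.prems by blast
  have bc: "card (Bad r) \<le> \<gamma> * \<gamma> * card (F (r - \<beta>))" by (rule bad_card)
  have key: "4 * real (card (Bad r)) \<le> real (card (Bl r))"
  proof (cases "\<beta> \<le> r")
    case True
    have "card (F (r - \<beta>)) \<le> card (Bl (r - \<beta>))" using all Suc.prems by simp
    then have "card (Bad r) \<le> \<gamma> * \<gamma> * card (Bl (r - \<beta>))"
      using bc mult_le_mono2 order_trans by blast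
    then have "real (card (Bad r)) \<le> real (\<gamma> * \<gamma> * card (Bl (r - \<beta>)))"
      by (simp only: of_nat_le_iff)
    then have "real (card (Bad r)) \<le> real \<gamma> ^ 2 * real (card (Bl (r - \<beta>)))"
      by (simp add: power2_eq_square)
    then have "4 * real (card (Bad r)) \<le> 4 * real \<gamma> ^ 2 * real (card (Bl (r - \<beta>)))" by simp
    also have "\<dots> \<le> (3/2) ^ \<beta> * real (card (Bl (r - \<beta>)))"
      by (rule mult_right_mono[OF hb]) simp
    also have "\<dots> \<le> real (card (Bl r))" using IH[of "r - \<beta>"] True by simp
    finally show ?thesis .
  next
    case False
    then have "r - \<beta> = 0" by simp
    then have "card (Bad r) = 0" using bc by simp
    then show ?thesis by simp
  qed
  have one: "(3/2) * real (card (Bl r)) \<le> real (card (Bl (Suc r)))"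
    using st key by linarith
  show ?case
  proof (cases "i = Suc r")
    case True then show ?thesis by simp
  next
    case False
    then have ir: "i \<le> r" using Suc.prems by simp
    then have "(3/2) ^ (Suc r - i) * real (card (Bl i)) = (3/2) * ((3/2) ^ (r - i) * real (card (Bl i)))"
      by (simp add: Suc_diff_le)
    also have "\<dots> \<le> (3/2) * real (card (Bl r))" using IH[OF ir] by (simp add: mult.commute)
    finally show ?thesis using one by simp
  qed
qed

lemma exR:
  assumes hb: "4 * real \<gamma> ^ 2 \<le> (3/2) ^ \<beta>"
  shows "\<exists>R. card (Bl (Suc R)) < card (F (Suc R)) \<and> (3/2) ^ R \<le> real (card V)
              \<and> (\<forall>j\<le>R. card (F j) \<le> card (Bl j))"
proof -
  have bound: "(3/2) ^ N \<le> real (card V)" if all: "\<forall>j\<le>N. card (F j) \<le> card (Bl j)" for N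
  proof -
    have "(3/2) ^ (N - 0) * real (card (Bl 0)) \<le> real (card (Bl N))"
      by (rule growth[OF hb all]) auto
    moreover have "card (Bl N) \<le> card V" by (rule card_mono[OF finV Bl_V])
    ultimately show ?thesis by (simp add: Bl0)
  qed
  obtain N :: nat where N: "real (card V) < (3/2) ^ N"
    using real_arch_pow[of "3/2" "real (card V)"] by auto
  have ex: "\<exists>R. card (Bl R) < card (F R)"
  proof (rule ccontr)
    assume "\<not> ?thesis"
    then have "\<forall>j\<le>N. card (F j) \<le> card (Bl j)" by (simp add: not_less)
    from bound[OF this] N show False by linarith
  qed
  define R0 where "R0 = (LEAST R. card (Bl R) < card (F R))"
  have R0: "card (Bl R0) < card (F R0)" unfolding R0_def by (rule LeastI_ex[OF ex])
  have below: "\<forall>j<R0. card (F j) \<le> card (Bl j)"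
    using not_less_Least[of _ "\<lambda>R. card (Bl R) < card (F R)"] unfolding R0_def[symmetric] by (simp add: not_less)
  have "R0 \<noteq> 0"
  proof
    assume "R0 = 0" with R0 show False by simp
  qed
  then obtain R where R: "R0 = Suc R" by (cases R0) auto
  have all: "\<forall>j\<le>R. card (F j) \<le> card (Bl j)" using below R by simp
  show ?thesis using R0 R all bound[OF all] by blast
qed

definition pe where "pe u = (SOME e. e \<in> F (dep u) \<and> e \<notin> F (dep u - 1) \<and> u \<in> ends e)"
definition pv where "pv u = (SOME p. p \<in> ends (pe u) \<and> p \<noteq> u)"

lemma par: assumes u: "u \<in> Bl N" "u \<noteq> v"
  shows "dep u \<ge> 1" "pe u \<in> F (dep u)" "pe u \<notin> F (dep u - 1)" "ends (pe u) = {u, pv u}"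
    "pv u \<noteq> u" "dep (pv u) = dep u - 1" "pv u \<in> Bl N" "lev (pe u) = dep u" "dep u \<le> N"
proof -
  have dN: "dep u \<le> N" using dep_le[OF u(1)] .
  show "dep u \<le> N" by (fact dN)
  have ub: "u \<in> Bl (dep u)" using Bl_dep[OF u(1)] .
  have d0: "dep u \<noteq> 0" using dep0[OF u(1)] u(2) by blast
  then show d1: "dep u \<ge> 1" by simp
  obtain r where r: "dep u = Suc r" using d0 not0_implies_Suc by blast
  have "u \<notin> Bl r" using Bl_iff[OF u(1), of r] r by simp
  moreover have "u \<in> Bl (Suc r)" using ub r by simp
  ultimately obtain e where e: "e \<in> F (Suc r)" "u \<in> ends e" "e \<notin> F r"
    using u(2) unfolding Bl_def by blast
  have ex: "\<exists>e. e \<in> F (dep u) \<and> e \<notin> F (dep u - 1) \<and> u \<in> ends e" using e r by auto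
  have pe: "pe u \<in> F (dep u) \<and> pe u \<notin> F (dep u - 1) \<and> u \<in> ends (pe u)"
    unfolding pe_def by (rule someI_ex[OF ex])
  then show "pe u \<in> F (dep u)" "pe u \<notin> F (dep u - 1)" by auto
  have peE: "pe u \<in> E" using pe F_E by blast
  obtain a b where ab: "ends (pe u) = {a, b}" "a \<noteq> b"
    using ends_card[OF peE] by (meson card_2_iff)
  have ex2: "\<exists>p. p \<in> ends (pe u) \<and> p \<noteq> u" using ab by blast
  have pv: "pv u \<in> ends (pe u) \<and> pv u \<noteq> u" unfolding pv_def by (rule someI_ex[OF ex2])
  have uin: "u \<in> ends (pe u)" using pe by simp
  show ends: "ends (pe u) = {u, pv u}"
  proof -
    have "u = a \<or> u = b" "pv u = a \<or> pv u = b" using uin pv ab by auto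
    then show ?thesis using ab(1) pv by auto
  qed
  show "pv u \<noteq> u" using pv by simp
  have pF: "pe u \<in> F (Suc r)" "pe u \<notin> F r" using pe r by auto
  show lv: "lev (pe u) = dep u" using lev_eq[OF pF] r by simp
  obtain q where q: "q \<in> ends (pe u)" "Suc (dep q) = lev (pe u)"
    using lev_ends(2)[OF pF(1)] by blast
  have "q \<noteq> u" using q lv by auto
  then have "q = pv u" using q(1) ends by simp
  then show "dep (pv u) = dep u - 1" using q lv by simp
  have "pv u \<in> ends (pe u)" using pv by simp
  then have "pv u \<in> Bl (dep u)" using ends_Bl[OF pe[THEN conjunct1]] by (rule subsetD[rotated])
  then show "pv u \<in> Bl N" using Bl_mono[OF dN] by (rule subsetD[rotated])
qed

lemma iter: "u \<in> Bl N \<Longrightarrow> i \<le> dep u \<Longrightarrow> (pv ^^ i) u \<in> Bl N \<and> dep ((pv ^^ i) u) = dep u - i"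
proof (induction i)
  case 0 then show ?case by simp
next
  case (Suc i)
  let ?y = "(pv ^^ i) u"
  have y: "?y \<in> Bl N" "dep ?y = dep u - i" using Suc by auto
  have "?y \<noteq> v" using y Suc.prems dep_v by auto
  then have "pv ?y \<in> Bl N" "dep (pv ?y) = dep ?y - 1" using par(6,7)[OF y(1)] by auto
  then show ?case using y Suc.prems by simp
qed

definition anc where "anc x = (\<lambda>i. (pv ^^ i) x) ` {..dep x}"

lemma anc_Bl: "x \<in> Bl N \<Longrightarrow> anc x \<subseteq> Bl N"
proof
  fix u assume x: "x \<in> Bl N" and "u \<in> anc x"
  then obtain i where "i \<le> dep x" "u = (pv ^^ i) x" unfolding anc_def by auto
  then show "u \<in> Bl N" using iter[OF x] by blast
qed
lemma anc_self: "x \<in> anc x" unfolding anc_def by force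
lemma anc_v: "x \<in> Bl N \<Longrightarrow> v \<in> anc x"
proof -
  assume x: "x \<in> Bl N"
  have "(pv ^^ dep x) x \<in> Bl N \<and> dep ((pv ^^ dep x) x) = 0" using iter[OF x, of "dep x"] by simp
  then have "(pv ^^ dep x) x = v" using dep0 by blast
  then show ?thesis unfolding anc_def by force
qed
lemma anc_closed: "x \<in> Bl N \<Longrightarrow> y \<in> anc x \<Longrightarrow> y \<noteq> v \<Longrightarrow> pv y \<in> anc x"
proof -
  assume x: "x \<in> Bl N" and y: "y \<in> anc x" "y \<noteq> v"
  then obtain i where i: "i \<le> dep x" "y = (pv ^^ i) x" unfolding anc_def by auto
  have "dep y = dep x - i" "y \<in> Bl N" using iter[OF x i(1)] i by auto
  then have "i < dep x" using y(2) dep0 by (cases "i < dep x") auto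
  then have "Suc i \<in> {..dep x}" by simp
  moreover have "pv y = (pv ^^ Suc i) x" using i by simp
  ultimately show ?thesis unfolding anc_def by blast
qed
lemma anc_card: "card (anc x) \<le> Suc (dep x)"
  unfolding anc_def using card_image_le[of "{..dep x}" "\<lambda>i. (pv ^^ i) x"] by simp
lemma anc_window: assumes x: "x \<in> Bl N"
  shows "card {u\<in>anc x. d \<le> dep u \<and> dep u \<le> d + K} \<le> Suc K"
proof -
  have "{u\<in>anc x. d \<le> dep u \<and> dep u \<le> d + K} \<subseteq> (\<lambda>i. (pv ^^ i) x) ` {dep x - (d + K)..dep x - d}"
  proof
    fix u assume "u \<in> {u\<in>anc x. d \<le> dep u \<and> dep u \<le> d + K}"
    then obtain i where i: "i \<le> dep x" "u = (pv ^^ i) x" "d \<le> dep u" "dep u \<le> d + K"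
      unfolding anc_def by auto
    have "dep u = dep x - i" using iter[OF x i(1)] i by simp
    then have "i \<in> {dep x - (d + K)..dep x - d}" using i by auto
    then show "u \<in> (\<lambda>i. (pv ^^ i) x) ` {dep x - (d + K)..dep x - d}" using i by blast
  qed
  then have "card {u\<in>anc x. d \<le> dep u \<and> dep u \<le> d + K} \<le> card ((\<lambda>i. (pv ^^ i) x) ` {dep x - (d + K)..dep x - d})"
    by (rule card_mono[rotated]) simp
  also have "\<dots> \<le> card {dep x - (d + K)..dep x - d}" by (rule card_image_le) simp
  also have "\<dots> \<le> Suc K" by simp
  finally show ?thesis .
qed

lemma main:
  assumes hb: "4 * real \<gamma> ^ 2 \<le> (3/2) ^ \<beta>"
  shows "\<exists>V0 E0 B R.
     subgraph V0 E0 V E ends \<and>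
     path_decomposition V0 E0 ends B \<and>
     pd_width B \<le> 4 * (\<beta> + 2) \<and>
     card E0 = card V0 + 1 \<and>
     (3/2) ^ R \<le> real (card V) \<and> card V0 \<le> 4 * R + 8 \<and>
     (\<forall>e1\<in>E0. \<forall>e2\<in>E0. w e1 \<inter> w e2 \<noteq> {} \<longrightarrow>
        (\<exists>i<length B. ends e1 \<union> ends e2 \<subseteq> B ! i)) \<and>
     (\<forall>e\<in>E0. nat_interval {i. i < length B \<and> ends e \<subseteq> B ! i})"
proof -
  obtain R where R: "card (Bl (Suc R)) < card (F (Suc R))" "(3/2) ^ R \<le> real (card V)"
    using exR[OF hb] by blast
  define N where "N = Suc R"
  define T where "T = pe ` (Bl N - {v})"
  have TF: "T \<subseteq> F N"
  proof
    fix e assume "e \<in> T"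
    then obtain u where u: "u \<in> Bl N" "u \<noteq> v" "e = pe u" unfolding T_def by blast
    then show "e \<in> F N" using par(2,9)[OF u(1,2)] F_mono by blast
  qed
  have "card T \<le> card (Bl N - {v})" unfolding T_def by (rule card_image_le) (simp add: Bl_fin)
  also have "\<dots> = card (Bl N) - 1" using v_Bl Bl_fin by simp
  finally have cT: "card T \<le> card (Bl N) - 1" .
  have "card (Bl N) \<ge> 1" using v_Bl Bl_fin by (metis One_nat_def Suc_leI card_gt_0_iff empty_iff)
  then have c2: "card (F N - T) \<ge> 2"
    using card_Diff_subset[OF finite_subset[OF TF F_fin] TF] cT R(1) unfolding N_def by linarith
  have finD: "finite (F N - T)" using F_fin by simp
  have "F N - T \<noteq> {}" using c2 by (intro notI) simp
  then obtain f1 where f1: "f1 \<in> F N - T" by blast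
  have "card (F N - T - {f1}) \<ge> 1" using c2 f1 finD by simp
  then have "F N - T - {f1} \<noteq> {}" by (intro notI) simp
  then obtain f2 where f2: "f2 \<in> F N - T" "f2 \<noteq> f1" by blast
  define X where "X = ends f1 \<union> ends f2"
  have f1E: "f1 \<in> E" and f2E: "f2 \<in> E" using f1 f2 F_E by auto
  have XB: "X \<subseteq> Bl N" unfolding X_def using ends_Bl f1 f2 by blast
  have cX: "card X \<le> 4"
  proof -
    have "card X \<le> card (ends f1) + card (ends f2)" unfolding X_def by (rule card_Un_le)
    then show ?thesis using ends_card f1E f2E by simp
  qed
  have finX: "finite X" unfolding X_def using ends_fin f1E f2E by simp
  have Xne: "X \<noteq> {}" unfolding X_def using ends_card[OF f1E] by auto
  define V0 where "V0 = (\<Union>x\<in>X. anc x)"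
  have V0B: "V0 \<subseteq> Bl N" unfolding V0_def using anc_Bl XB by blast
  have finV0: "finite V0" using V0B Bl_fin finite_subset by blast
  have vV0: "v \<in> V0" unfolding V0_def using anc_v XB Xne by blast
  have XV0: "X \<subseteq> V0" unfolding V0_def using anc_self by blast
  have clos: "pv y \<in> V0" if "y \<in> V0" "y \<noteq> v" for y
    using that anc_closed XB unfolding V0_def by blast
  have inj: "inj_on pe (Bl N - {v})"
  proof (rule inj_onI)
    fix x y assume x: "x \<in> Bl N - {v}" and y: "y \<in> Bl N - {v}" and eq: "pe x = pe y"
    have ex: "ends (pe x) = {x, pv x}" "dep (pv x) = dep x - 1" "dep x \<ge> 1" using par x by auto
    have ey: "ends (pe y) = {y, pv y}" "dep (pv y) = dep y - 1" "dep y \<ge> 1" using par y by auto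
    have "{x, pv x} = {y, pv y}" using ex ey eq by simp
    then have "x = y \<or> (x = pv y \<and> pv x = y)" unfolding doubleton_eq_iff by blast
    then show "x = y"
    proof
      assume "x = pv y \<and> pv x = y"
      then have "dep x = dep y - 1" "dep y = dep x - 1" using ex ey by auto
      then show "x = y" using ex(3) ey(3) by linarith
    qed
  qed
  define P where "P = pe ` (V0 - {v})"
  have cP: "card P = card V0 - 1"
  proof -
    have "card P = card (V0 - {v})" unfolding P_def
      by (rule card_image[OF inj_on_subset[OF inj]]) (use V0B in blast)
    then show ?thesis using vV0 finV0 by simp
  qed
  have PT: "P \<subseteq> T" unfolding P_def T_def using V0B by blast
  define E0 where "E0 = P \<union> {f1, f2}"
  have fP: "f1 \<notin> P" "f2 \<notin> P" using f1 f2 PT by auto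
  have finP: "finite P" unfolding P_def using finV0 by simp
  have cE0: "card E0 = card V0 + 1"
  proof -
    have "card E0 = card P + 2" unfolding E0_def using fP f2 finP by simp
    moreover have "card V0 \<ge> 1" using vV0 finV0 by (metis One_nat_def Suc_leI card_gt_0_iff empty_iff)
    ultimately show ?thesis using cP by simp
  qed
  have E0F: "E0 \<subseteq> F N" unfolding E0_def using PT TF f1 f2 by blast
  have endsV0: "ends e \<subseteq> V0" if "e \<in> E0" for e
  proof (cases "e \<in> P")
    case True
    then obtain u where u: "u \<in> V0" "u \<noteq> v" "e = pe u" unfolding P_def by blast
    then have "ends e = {u, pv u}" using par(4) V0B by blast
    then show ?thesis using u clos by simp
  next
    case False
    then have "e = f1 \<or> e = f2" using that unfolding E0_def by blast
    then show ?thesis using XV0 unfolding X_def by blast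
  qed
  have sg: "subgraph V0 E0 V E ends"
    unfolding subgraph_def using V0B Bl_V E0F F_E endsV0 by blast
  have cV0: "card V0 \<le> 4 * R + 8"
  proof -
    have "card V0 \<le> (\<Sum>x\<in>X. card (anc x))" unfolding V0_def by (rule card_UN_le[OF finX])
    also have "\<dots> \<le> (\<Sum>x\<in>X. Suc N)"
    proof (rule sum_mono)
      fix x assume "x \<in> X"
      then have "dep x \<le> N" using XB dep_le by blast
      then show "card (anc x) \<le> Suc N" using anc_card[of x] by simp
    qed
    also have "\<dots> = card X * Suc N" by simp
    also have "\<dots> \<le> 4 * Suc N" using cX by (rule mult_le_mono1)
    finally show ?thesis unfolding N_def by simp
  qed
  define K where "K = Suc \<beta>"
  define bag where "bag d = {u\<in>V0. d \<le> dep u \<and> dep u \<le> d + K}" for d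
  define B where "B = map bag [0..<Suc N]"
  have lenB: "length B = Suc N" unfolding B_def by simp
  have Bnth: "B ! d = bag d" if "d < Suc N" for d unfolding B_def using that by (simp del: upt_Suc)
  have setB: "set B = bag ` {0..<Suc N}" unfolding B_def by (simp del: upt_Suc)
  have edge_bag: "ends e \<subseteq> bag d" if "e \<in> E0" "d \<le> lev e - 1" "d + K \<ge> lev e" for e d
  proof
    fix u assume u: "u \<in> ends e"
    have "e \<in> F N" using that E0F by blast
    then have "dep u \<le> lev e \<and> lev e \<le> Suc (dep u)" using lev_ends(1) u by blast
    then show "u \<in> bag d" unfolding bag_def using that endsV0 u by auto
  qed
  have levN: "lev e \<le> N" "lev e \<ge> 1" if "e \<in> E0" for e using lev(2,3) that E0F by blast+
  have conf: "\<exists>i<length B. ends e1 \<union> ends e2 \<subseteq> B ! i"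
    if e: "e1 \<in> E0" "e2 \<in> E0" "w e1 \<inter> w e2 \<noteq> {}" for e1 e2
  proof -
    have gen: "\<exists>i<length B. ends a \<union> ends b \<subseteq> B ! i"
      if ab: "a \<in> E0" "b \<in> E0" "w a \<inter> w b \<noteq> {}" "lev b \<le> lev a" for a b
    proof -
      have "lev a \<le> lev b + \<beta>" using lev_conflict ab E0F by blast
      then have "ends a \<subseteq> bag (lev b - 1)" "ends b \<subseteq> bag (lev b - 1)"
        using edge_bag ab levN unfolding K_def by auto
      moreover have "lev b - 1 < Suc N" using levN(1)[OF ab(2)] by simp
      ultimately show ?thesis using Bnth[of "lev b - 1"] lenB by (intro exI[of _ "lev b - 1"]) auto
    qed
    show ?thesis
    proof (cases "lev e2 \<le> lev e1")
      case True then show ?thesis using gen e by blast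
    next
      case False
      then have "\<exists>i<length B. ends e2 \<union> ends e1 \<subseteq> B ! i" using gen e by (simp add: inf_commute)
      then show ?thesis by (simp add: Un_commute)
    qed
  qed
  have pd: "path_decomposition V0 E0 ends B"
    unfolding path_decomposition_def
  proof (intro conjI ballI)
    show "\<Union> (set B) = V0"
    proof
      show "\<Union> (set B) \<subseteq> V0" unfolding setB bag_def by blast
      show "V0 \<subseteq> \<Union> (set B)"
      proof
        fix u assume u: "u \<in> V0"
        then have "dep u \<le> N" using V0B dep_le by blast
        moreover have "u \<in> bag (dep u)" unfolding bag_def using u by simp
        ultimately show "u \<in> \<Union> (set B)" unfolding setB by force
      qed
    qed
  next
    fix e assume e: "e \<in> E0"
    have "ends e \<subseteq> bag (lev e - 1)" using edge_bag[OF e] unfolding K_def by simp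
    moreover have "lev e - 1 < Suc N" using levN[OF e] by simp
    ultimately show "\<exists>i<length B. ends e \<subseteq> B ! i" using Bnth[of "lev e - 1"] lenB by (intro exI[of _ "lev e - 1"]) auto
  next
    fix u assume u: "u \<in> V0"
    show "nat_interval {i. i < length B \<and> u \<in> B ! i}"
      unfolding nat_interval_def lenB
    proof (intro allI impI)
      fix i j k assume a: "i \<in> {i. i < Suc N \<and> u \<in> B ! i}" "k \<in> {i. i < Suc N \<and> u \<in> B ! i}" "i \<le> j" "j \<le> k"
      then have "u \<in> bag i" "u \<in> bag k" "j < Suc N" using Bnth by auto
      then have "u \<in> bag j" using a unfolding bag_def by auto
      then show "j \<in> {i. i < Suc N \<and> u \<in> B ! i}" using Bnth \<open>j < Suc N\<close> by simp
    qed
  qed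
  have dint: "nat_interval {i. i < length B \<and> ends e \<subseteq> B ! i}" if "e \<in> E0" for e
    unfolding nat_interval_def lenB
  proof (intro allI impI)
    fix i j k assume a: "i \<in> {i. i < Suc N \<and> ends e \<subseteq> B ! i}" "k \<in> {i. i < Suc N \<and> ends e \<subseteq> B ! i}" "i \<le> j" "j \<le> k"
    then have "ends e \<subseteq> bag i" "ends e \<subseteq> bag k" "j < Suc N" using Bnth by auto
    then have "ends e \<subseteq> bag j" using a unfolding bag_def by auto
    then show "j \<in> {i. i < Suc N \<and> ends e \<subseteq> B ! i}" using Bnth \<open>j < Suc N\<close> by simp
  qed
  have width: "pd_width B \<le> 4 * (\<beta> + 2)"
  proof -
    have bagc: "card (bag d) \<le> 4 * (\<beta> + 2)" for d
    proof -
      have "bag d \<subseteq> (\<Union>x\<in>X. {u\<in>anc x. d \<le> dep u \<and> dep u \<le> d + K})"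
        unfolding bag_def V0_def by blast
      then have "card (bag d) \<le> card (\<Union>x\<in>X. {u\<in>anc x. d \<le> dep u \<and> dep u \<le> d + K})"
        by (rule card_mono[rotated]) (use finX in \<open>auto simp: anc_def\<close>)
      also have "\<dots> \<le> (\<Sum>x\<in>X. card {u\<in>anc x. d \<le> dep u \<and> dep u \<le> d + K})"
        by (rule card_UN_le[OF finX])
      also have "\<dots> \<le> (\<Sum>x\<in>X. Suc K)"
        by (rule sum_mono) (use anc_window XB in blast)
      also have "\<dots> = card X * Suc K" by simp
      also have "\<dots> \<le> 4 * Suc K" using cX by (rule mult_le_mono1)
      finally show ?thesis unfolding K_def by simp
    qed
    have "Max (insert 0 (card ` set B)) \<le> 4 * (\<beta> + 2)"
      using bagc unfolding setB by (subst Max_le_iff) auto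
    then show ?thesis unfolding pd_width_def by (rule le_trans[OF diff_le_self])
  qed
  show ?thesis
    using sg pd width cE0 R(2) cV0 conf dint by blast
qed

end

theorem corollary6:
  fixes V :: "'v set" and E :: "'e set" and ends :: "'e \<Rightarrow> 'v set"
    and \<Sigma> :: "'s set" and w :: "'e \<Rightarrow> 's set" and \<gamma> :: nat
  assumes H: "multigraph V E ends"
    and nonempty: "V \<noteq> {}"
    and mindeg: "\<forall>v\<in>V. degree E ends v \<ge> 3"
    and gamma: "\<gamma> \<ge> 1"
    and w_sub: "\<forall>e\<in>E. w e \<subseteq> \<Sigma> \<and> finite (w e) \<and> card (w e) \<le> \<gamma>"
    and w_load: "\<forall>x\<in>\<Sigma>. card {e\<in>E. x \<in> w e} \<le> \<gamma>"
  shows "\<exists>V0 E0 B.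
     subgraph V0 E0 V E ends \<and>
     path_decomposition V0 E0 ends B \<and>
     real (pd_width B) \<le> 4 * (real_of_int \<lceil>log (3/2) (12 * real \<gamma> ^ 2)\<rceil> + 3) \<and>
     card E0 = card V0 + 1 \<and>
     real (card V0) \<le> 4 * (log (3/2) (real (card V)) + 2) \<and>
     (\<forall>e1\<in>E0. \<forall>e2\<in>E0. w e1 \<inter> w e2 \<noteq> {} \<longrightarrow>
        (\<exists>i<length B. ends e1 \<union> ends e2 \<subseteq> B ! i)) \<and>
     (\<forall>e\<in>E0. nat_interval {i. i < length B \<and> ends e \<subseteq> B ! i})"
proof -
  obtain v where vV: "v \<in> V" using nonempty by blast
  define l where "l = log (3/2) (12 * real \<gamma> ^ 2)"
  define \<beta> where "\<beta> = nat \<lceil>l\<rceil>"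
  have "real \<gamma> \<ge> 1" using gamma by simp
  then have "real \<gamma> ^ 2 \<ge> 1" by (rule one_le_power)
  then have g12: "12 * real \<gamma> ^ 2 \<ge> 1" by simp
  have l0: "l \<ge> 0" unfolding l_def using g12 gamma by (subst zero_le_log_cancel_iff) auto
  have rb: "real \<beta> = real_of_int \<lceil>l\<rceil>" unfolding \<beta>_def using l0 by simp
  have hb: "4 * real \<gamma> ^ 2 \<le> (3/2) ^ \<beta>"
  proof -
    have "12 * real \<gamma> ^ 2 = (3/2) powr l" unfolding l_def using g12 gamma by (subst powr_log_cancel) auto
    also have "\<dots> \<le> (3/2) powr real \<beta>" using rb by (intro powr_mono) auto
    also have "\<dots> = (3/2) ^ \<beta>" by (simp add: powr_realpow)
    finally have "12 * real \<gamma> ^ 2 \<le> (3/2) ^ \<beta>" .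
    moreover have "0 \<le> real \<gamma> ^ 2" by simp
    ultimately show ?thesis by linarith
  qed
  interpret L V E ends \<Sigma> w \<gamma> v \<beta>
    using H vV mindeg w_sub w_load by unfold_locales
  obtain V0 E0 B R where m:
     "subgraph V0 E0 V E ends"
     "path_decomposition V0 E0 ends B"
     "pd_width B \<le> 4 * (\<beta> + 2)"
     "card E0 = card V0 + 1"
     "(3/2) ^ R \<le> real (card V)" "card V0 \<le> 4 * R + 8"
     "\<forall>e1\<in>E0. \<forall>e2\<in>E0. w e1 \<inter> w e2 \<noteq> {} \<longrightarrow> (\<exists>i<length B. ends e1 \<union> ends e2 \<subseteq> B ! i)"
     "\<forall>e\<in>E0. nat_interval {i. i < length B \<and> ends e \<subseteq> B ! i}"
    using main[OF hb] by blast
  have w: "real (pd_width B) \<le> 4 * (real_of_int \<lceil>log (3/2) (12 * real \<gamma> ^ 2)\<rceil> + 3)"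
  proof -
    have "real (pd_width B) \<le> real (4 * (\<beta> + 2))" using m(3) by (simp only: of_nat_le_iff)
    then have "real (pd_width B) \<le> 4 * (real \<beta> + 2)" by simp
    also have "\<dots> \<le> 4 * (real \<beta> + 3)" by simp
    finally show ?thesis unfolding rb[unfolded l_def] .
  qed
  have n0: "real (card V) > 0" using nonempty finV by (simp add: card_gt_0_iff)
  have "real R \<le> log (3/2) (real (card V))"
    using m(5) n0 by (subst le_log_iff) (auto simp: powr_realpow)
  then have c: "real (card V0) \<le> 4 * (log (3/2) (real (card V)) + 2)"
  proof -
    have "real (card V0) \<le> real (4 * R + 8)" using m(6) by (simp only: of_nat_le_iff)
    then show ?thesis using \<open>real R \<le> log (3/2) (real (card V))\<close> by simp
  qed
  show ?thesis using m w c by blast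
qed

end
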